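(* Let $n\geq 1$, $B^n:=\{(x_1,\dots,x_n)\in\mathbb{R}^n: 1\geq x_1\geq\dots\geq x_n\geq 0\}$ and let $T\colon B^n\to B^n$ be the subtractive Selmer map defined below. For $j\in\{0,\dots,n\}$ put $B(j):=\{x\in B^n: i(1,x_1,\dots,x_n)=j\}$. Then the sets $B(0),\dots,B(n)$ form a partition of $B^n$ and the restriction of $T$ to each $B(j)$ is injective; hence $(B^n,T)$ is a fibred system with digit set $\{0,\dots,n\}$.
   Context: Let $\Delta^{n+1}:=\{b=(b_0,\dots,b_n): b_0\geq b_1\geq\dots\geq b_n\geq 0\}$. For $b\in\Delta^{n+1}$ let $i(b)$ be the smallest index $j\in\{0,\dots,n\}$ with $b_0-b_n\geq b_{j+1}$ (convention $b_{n+1}:=0$), and define $\pi\sigma b:=(b_1,\dots,b_{i},\,b_0-b_n,\,b_{i+1},\dots,b_n)$ with $i=i(b)$ (for $i=0$ this is $(b_0-b_n,b_1,\dots,b_n)$, for $i=n$ it is $(b_1,\dots,b_n,b_0-b_n)$); then $\pi\sigma b\in\Delta^{n+1}$. Let $p(b_0,\dots,b_n)=(b_1/b_0,\dots,b_n/b_0)$. The map $T$ is $T(x):=p(\pi\sigma(1,x_1,\dots,x_n))$. A fibred system is a pair $(B,T)$, $T\colon B\to B$, with a finite or countable digit set $I$ and a map $k\colon B\to I$ such that the sets $k^{-1}\{i\}$ partition $B$ and $T$ is injective on each of them. *)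

theory Defs
  imports Complex_Main "HOL-Library.Countable_Set"
begin

text \<open>Vectors are lists: b = [b_0,...,b_n] has length n+1; x = [x_1,...,x_n] has
  length n, so x_k is x ! (k-1).\<close>

definition bcomp :: "real list \<Rightarrow> nat \<Rightarrow> real" where
  "bcomp b k = (if k < length b then b ! k else 0)"

definition sel_idx :: "real list \<Rightarrow> nat" where
  "sel_idx b = (LEAST j. j \<le> length b - 1 \<and> b ! 0 - b ! (length b - 1) \<ge> bcomp b (Suc j))"

definition pisigma :: "real list \<Rightarrow> real list" where
  "pisigma b = (let i = sel_idx b; c = b ! 0 - b ! (length b - 1)
                in take i (tl b) @ [c] @ drop i (tl b))"

definition proj :: "real list \<Rightarrow> real list" where
  "proj b = map (\<lambda>y. y / b ! 0) (tl b)"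

definition selmerT :: "real list \<Rightarrow> real list" where
  "selmerT x = proj (pisigma (1 # x))"

definition Bn :: "nat \<Rightarrow> real list set" where
  "Bn n = {x. length x = n \<and> (0 < n \<longrightarrow> x ! 0 \<le> 1 \<and> 0 \<le> x ! (n - 1))
              \<and> (\<forall>k. Suc k < n \<longrightarrow> x ! (Suc k) \<le> x ! k)}"

definition Bj :: "nat \<Rightarrow> nat \<Rightarrow> real list set" where
  "Bj n j = {x \<in> Bn n. sel_idx (1 # x) = j}"

definition fibred_system :: "'a set \<Rightarrow> ('a \<Rightarrow> 'a) \<Rightarrow> 'b set \<Rightarrow> ('a \<Rightarrow> 'b) \<Rightarrow> bool" where
  "fibred_system B T I k \<longleftrightarrow>
     T ` B \<subseteq> B \<and> countable I \<and> (\<forall>x\<in>B. k x \<in> I) \<and>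
     (\<forall>i\<in>I. {x\<in>B. k x = i} \<noteq> {}) \<and>
     (\<forall>i\<in>I. inj_on T {x\<in>B. k x = i})"

end

theory Submission
  imports Defs
begin

lemma Bn_mono:
  assumes "x \<in> Bn n" "i \<le> k" "k < n"
  shows "x ! k \<le> x ! i"
  using assms(2,3)
proof (induction k)
  case 0 then show ?case by simp
next
  case (Suc k)
  show ?case
  proof (cases "i = Suc k")
    case False
    then have "i \<le> k" using Suc by simp
    then have "x ! k \<le> x ! i" using Suc by simp
    moreover have "x ! Suc k \<le> x ! k" using assms(1) Suc.prems unfolding Bn_def by auto
    ultimately show ?thesis by simp
  qed simp
qed

lemma Bn_bounds:
  assumes "x \<in> Bn n" "k < n"
  shows "0 \<le> x ! k \<and> x ! k \<le> 1"
proof -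
  have "x ! (n-1) \<le> x ! k" using Bn_mono[OF assms(1), of k "n-1"] assms(2) by simp
  moreover have "x ! k \<le> x ! 0" using Bn_mono[OF assms(1), of 0 k] assms(2) by simp
  moreover have "x ! 0 \<le> 1 \<and> 0 \<le> x ! (n-1)" using assms unfolding Bn_def by auto
  ultimately show ?thesis by linarith
qed

lemma Bn_len: "x \<in> Bn n \<Longrightarrow> length x = n" unfolding Bn_def by auto

definition P :: "nat \<Rightarrow> real list \<Rightarrow> nat \<Rightarrow> bool" where
  "P n x j \<longleftrightarrow> j \<le> n \<and> (if j < n then x ! j else 0) \<le> 1 - x ! (n-1)"

lemma sel_eq:
  assumes "length x = n" "n \<ge> 1"
  shows "sel_idx (1 # x) = (LEAST j. P n x j)"
proof -
  have e: "(1 # x) ! n = x ! (n-1)" using assms by (cases n) auto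
  have "\<And>j. (j \<le> length (1#x) - 1 \<and> (1#x) ! 0 - (1#x) ! (length (1#x) - 1) \<ge> bcomp (1#x) (Suc j))
     = P n x j"
    using assms e unfolding P_def bcomp_def by auto
  then show ?thesis unfolding sel_idx_def by simp
qed

lemma sel_facts:
  assumes "x \<in> Bn n" "n \<ge> 1"
  shows "P n x (sel_idx (1#x))" "\<And>j'. j' < sel_idx (1#x) \<Longrightarrow> \<not> P n x j'" "sel_idx (1#x) \<le> n"
proof -
  have l: "length x = n" using assms Bn_len by auto
  have Pn: "P n x n" using Bn_bounds[OF assms(1), of "n-1"] assms unfolding P_def by auto
  show "P n x (sel_idx (1#x))" unfolding sel_eq[OF l assms(2)] by (rule LeastI[of "P n x", OF Pn])
  show "\<And>j'. j' < sel_idx (1#x) \<Longrightarrow> \<not> P n x j'" unfolding sel_eq[OF l assms(2)]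
    by (rule not_less_Least)
  show "sel_idx (1#x) \<le> n" unfolding sel_eq[OF l assms(2)] by (rule Least_le[of "P n x", OF Pn])
qed

lemma pis:
  assumes "length x = n" "n \<ge> 1"
  shows "pisigma (1#x) = take (sel_idx (1#x)) x @ (1 - x!(n-1)) # drop (sel_idx (1#x)) x"
proof -
  have e: "(1 # x) ! n = x ! (n-1)" using assms by (cases n) auto
  show ?thesis unfolding pisigma_def Let_def using assms e by simp
qed

lemma vnth:
  assumes "length x = n" "j \<le> n" "k \<le> n"
  shows "(take j x @ c # drop j x) ! k = (if k < j then x ! k else if k = j then c else x ! (k-1))"
proof -
  have "k > j \<Longrightarrow> (c # drop j x) ! (k - j) = x ! (k - 1)"
    using assms by (simp add: nth_Cons')
  then show ?thesis using assms by (auto simp: nth_append min_def)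
qed


lemma v_props:
  assumes x: "x \<in> Bn n" and n: "n \<ge> 1"
  defines "j \<equiv> sel_idx (1#x)"
  defines "v \<equiv> take j x @ (1 - x!(n-1)) # drop j x"
  shows "\<And>k. k < n \<Longrightarrow> v ! Suc k \<le> v ! k"
    and "\<And>k. k \<le> n \<Longrightarrow> 0 \<le> v ! k"
    and "v ! 0 > 0"
    and "length v = Suc n"
proof -
  have l: "length x = n" using x Bn_len by auto
  have jn: "j \<le> n" using sel_facts(3)[OF x n] j_def by simp
  have Pj: "P n x j" using sel_facts(1)[OF x n] j_def by simp
  have c1: "j < n \<Longrightarrow> x ! j \<le> 1 - x!(n-1)" using Pj unfolding P_def by auto
  have c2: "j \<ge> 1 \<Longrightarrow> 1 - x!(n-1) < x ! (j-1)"
  proof -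
    assume "j \<ge> 1"
    then have "\<not> P n x (j-1)" using sel_facts(2)[OF x n, of "j-1"] j_def by simp
    moreover have "j - 1 < n" using \<open>j \<ge> 1\<close> jn by simp
    ultimately show ?thesis using \<open>j \<ge> 1\<close> jn unfolding P_def by auto
  qed
  have vn: "\<And>k. k \<le> n \<Longrightarrow> v ! k = (if k < j then x ! k else if k = j then 1 - x!(n-1) else x ! (k-1))"
    unfolding v_def using vnth[OF l jn] by blast
  have bd: "\<And>k. k < n \<Longrightarrow> 0 \<le> x ! k \<and> x ! k \<le> 1" using Bn_bounds[OF x] by blast
  have mo: "\<And>i k. i \<le> k \<Longrightarrow> k < n \<Longrightarrow> x ! k \<le> x ! i" using Bn_mono[OF x] by blast
  have cnn: "0 \<le> 1 - x!(n-1)" using bd[of "n-1"] n by simp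
  show "length v = Suc n" unfolding v_def using l jn by simp
  show "\<And>k. k \<le> n \<Longrightarrow> 0 \<le> v ! k"
  proof -
    fix k assume k: "k \<le> n"
    show "0 \<le> v ! k" using vn[OF k] bd[of k] bd[of "k-1"] cnn k jn
      by (cases "k < j"; cases "k = j"; auto)
  qed
  show "\<And>k. k < n \<Longrightarrow> v ! Suc k \<le> v ! k"
  proof -
    fix k assume k: "k < n"
    have a: "v ! Suc k = (if Suc k < j then x ! Suc k else if Suc k = j then 1 - x!(n-1) else x ! k)"
      using vn[of "Suc k"] k by simp
    have b: "v ! k = (if k < j then x ! k else if k = j then 1 - x!(n-1) else x ! (k-1))"
      using vn[of k] k by simp
    show "v ! Suc k \<le> v ! k"
    proof (cases "Suc k < j")
      case True then show ?thesis using a b mo[of k "Suc k"] jn by simp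
    next
      case f1: False
      show ?thesis
      proof (cases "Suc k = j")
        case True
        then have "j - 1 = k" by simp
        then show ?thesis using a b c2 True by simp
      next
        case False
        then have "k \<ge> j" using f1 by simp
        then show ?thesis
        proof (cases "k = j")
          case True then show ?thesis using a b c1 f1 k by simp
        next
          case False
          then show ?thesis using a b mo[of "k-1" k] k \<open>k \<ge> j\<close> f1 by simp
        qed
      qed
    qed
  qed
  show "v ! 0 > 0"
  proof (cases "j = 0")
    case True
    then have v0: "v ! 0 = 1 - x!(n-1)" using vn[of 0] by simp
    show ?thesis
    proof (rule ccontr)
      assume "\<not> v ! 0 > 0"
      then have "x!(n-1) = 1" using v0 cnn by simp
      moreover have "x ! 0 \<le> 1 - x!(n-1)" using c1 True n by simp
      moreover have "x!(n-1) \<le> x!0" using mo[of 0 "n-1"] n by simp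
      ultimately show False by simp
    qed
  next
    case False
    then have v0: "v ! 0 = x ! 0" using vn[of 0] by simp
    have "x ! (j-1) \<le> x ! 0" using mo[of 0 "j-1"] False jn by simp
    then show ?thesis using v0 c2 False cnn by simp
  qed
qed

lemma v_sum:
  fixes x :: "real list"
  assumes l: "length x = n" and n: "n \<ge> 1" and jn: "j \<le> n"
  defines "v \<equiv> take j x @ (1 - x!(n-1)) # drop j x"
  shows "v ! j + v ! (if j < n then n else n-1) = 1"
proof -
  have vn: "\<And>k. k \<le> n \<Longrightarrow> v ! k = (if k < j then x ! k else if k = j then 1 - x!(n-1) else x ! (k-1))"
    unfolding v_def using vnth[OF l jn] by blast
  show ?thesis using vn[of j] vn[of n] vn[of "n-1"] jn n by auto
qed

lemma selmerT_eq:
  assumes "x \<in> Bn n" "n \<ge> 1"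
  shows "selmerT x = map (\<lambda>y. y / (take (sel_idx (1#x)) x @ (1 - x!(n-1)) # drop (sel_idx (1#x)) x) ! 0)
            (tl (take (sel_idx (1#x)) x @ (1 - x!(n-1)) # drop (sel_idx (1#x)) x))"
  unfolding selmerT_def proj_def using pis[OF Bn_len[OF assms(1)] assms(2)] by simp

lemma T_in:
  assumes x: "x \<in> Bn n" and n: "n \<ge> 1"
  shows "selmerT x \<in> Bn n"
proof -
  define j where "j = sel_idx (1#x)"
  define v where "v = take j x @ (1 - x!(n-1)) # drop j x"
  note vp = v_props[OF x n, folded j_def, folded v_def]
  have T: "selmerT x = map (\<lambda>y. y / v ! 0) (tl v)" using selmerT_eq[OF x n] unfolding v_def j_def .
  have len: "length (selmerT x) = n" using T vp(4) by simp
  have Tn: "\<And>k. k < n \<Longrightarrow> selmerT x ! k = v ! Suc k / v ! 0" using T vp(4) by (simp add: nth_tl)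
  have h: "v ! 0 > 0" by (rule vp(3))
  have a: "selmerT x ! 0 \<le> 1" using Tn[of 0] n vp(1)[of 0] h by simp
  have b: "0 \<le> selmerT x ! (n-1)" using Tn[of "n-1"] n vp(2)[of n] h by simp
  have c: "\<And>k. Suc k < n \<Longrightarrow> selmerT x ! Suc k \<le> selmerT x ! k"
    using Tn vp(1) h by (simp add: divide_right_mono)
  show ?thesis unfolding Bn_def using len a b c by auto
qed

lemma T_inj:
  assumes n: "n \<ge> 1"
  shows "inj_on selmerT (Bj n j)"
proof
  fix x y assume xj: "x \<in> Bj n j" and yj: "y \<in> Bj n j" and e: "selmerT x = selmerT y"
  have x: "x \<in> Bn n" and jx: "sel_idx (1#x) = j" using xj unfolding Bj_def by auto
  have y: "y \<in> Bn n" and jy: "sel_idx (1#y) = j" using yj unfolding Bj_def by auto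
  have lx: "length x = n" and ly: "length y = n" using x y Bn_len by auto
  have jn: "j \<le> n" using sel_facts(3)[OF x n] jx by simp
  define vx where "vx = take j x @ (1 - x!(n-1)) # drop j x"
  define vy where "vy = take j y @ (1 - y!(n-1)) # drop j y"
  note px = v_props[OF x n, unfolded jx, folded vx_def]
  note py = v_props[OF y n, unfolded jy, folded vy_def]
  have Tx: "selmerT x = map (\<lambda>z. z / vx ! 0) (tl vx)" using selmerT_eq[OF x n] unfolding vx_def jx .
  have Ty: "selmerT y = map (\<lambda>z. z / vy ! 0) (tl vy)" using selmerT_eq[OF y n] unfolding vy_def jy .
  define r where "r = vy ! 0 / vx ! 0"
  have hx: "vx ! 0 > 0" by (rule px(3))
  have hy: "vy ! 0 > 0" by (rule py(3))
  have sc: "\<And>k. k \<le> n \<Longrightarrow> vy ! k = r * vx ! k"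
  proof -
    fix k assume k: "k \<le> n"
    show "vy ! k = r * vx ! k"
    proof (cases k)
      case 0 then show ?thesis using hx unfolding r_def by simp
    next
      case (Suc m)
      have "selmerT x ! m = selmerT y ! m" using e by simp
      then have "vx ! Suc m / vx ! 0 = vy ! Suc m / vy ! 0"
        using Tx Ty px(4) py(4) Suc k by (simp add: nth_tl)
      then show ?thesis using hx hy Suc unfolding r_def by (simp add: field_simps)
    qed
  qed
  define p where "p = (if j < n then n else n - 1)"
  have pn: "p \<le> n" unfolding p_def by simp
  have sx: "vx ! j + vx ! p = 1" using v_sum[OF lx n jn] unfolding vx_def p_def .
  have sy: "vy ! j + vy ! p = 1" using v_sum[OF ly n jn] unfolding vy_def p_def .
  have "r * (vx ! j + vx ! p) = 1" using sy sc[OF jn] sc[OF pn] by (simp add: algebra_simps)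
  then have r1: "r = 1" using sx by simp
  have "vx = vy" using sc r1 px(4) py(4) by (intro nth_equalityI) auto
  moreover have "x = take j vx @ drop (Suc j) vx" unfolding vx_def using lx jn by simp
  moreover have "y = take j vy @ drop (Suc j) vy" unfolding vy_def using ly jn by simp
  ultimately show "x = y" by simp
qed

lemma Bj_ne:
  assumes n: "n \<ge> 1" and jn: "j \<le> n"
  shows "Bj n j \<noteq> {}"
proof -
  define x :: "real list" where "x = replicate j 1 @ replicate (n-j) (1/2)"
  have l: "length x = n" unfolding x_def using jn by simp
  have xn: "\<And>k. k < n \<Longrightarrow> x ! k = (if k < j then 1 else 1/2)"
    unfolding x_def using jn by (auto simp: nth_append)
  have xB: "x \<in> Bn n" unfolding Bn_def using l xn n by auto
  have xl: "x ! (n-1) = (if j = n then 1 else 1/2)" using xn[of "n-1"] n jn by auto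
  have Pj: "P n x j" unfolding P_def using xn xl jn by auto
  have nP: "\<And>j'. j' < j \<Longrightarrow> \<not> P n x j'" unfolding P_def using xn xl jn by auto
  have "sel_idx (1#x) = j" unfolding sel_eq[OF l n]
    by (rule Least_equality[of "P n x", OF Pj]) (metis nP not_le)
  then show ?thesis using xB unfolding Bj_def by auto
qed

theorem mainTheorem2:
  fixes n :: nat
  assumes "n \<ge> 1"
  shows "(\<Union>j\<in>{0..n}. Bj n j) = Bn n
       \<and> (\<forall>j\<in>{0..n}. Bj n j \<noteq> {})
       \<and> (\<forall>j\<in>{0..n}. \<forall>j'\<in>{0..n}. j \<noteq> j' \<longrightarrow> Bj n j \<inter> Bj n j' = {})
       \<and> (\<forall>j\<in>{0..n}. inj_on selmerT (Bj n j))
       \<and> fibred_system (Bn n) selmerT {0..n} (\<lambda>x. sel_idx (1 # x))"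
proof -
  have U: "(\<Union>j\<in>{0..n}. Bj n j) = Bn n"
    using sel_facts(3)[OF _ assms] unfolding Bj_def by auto
  have fib: "\<And>i. {x\<in>Bn n. sel_idx (1#x) = i} = Bj n i" unfolding Bj_def by auto
  have F: "fibred_system (Bn n) selmerT {0..n} (\<lambda>x. sel_idx (1 # x))"
    unfolding fibred_system_def fib
    using T_in[OF _ assms] sel_facts(3)[OF _ assms] Bj_ne[OF assms] T_inj[OF assms]
    by (auto intro: countable_finite)
  show ?thesis using U F Bj_ne[OF assms] T_inj[OF assms] unfolding Bj_def by auto
qed

end
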